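(* For each integer $l\ge0$, the Taylor coefficients of $G_l(z)=z\,\partial h_l^{(1)}(z)/h_l^{(1)}(z)$ at $z=0$ satisfy $\operatorname{Im}G_l^{(2j)}(0)=0$ and $\operatorname{Re}G_l^{(2j+1)}(0)=0$ for all $j=0,1,2,\dots$, with $G_l(0)=-(l+1)$. Consequently, for $\epsilon$ small the equation $\lambda^2+\hat r_lG_l(\epsilon\lambda)=0$ can be written as $$\lambda^2+\hat r_l\big[\mathcal{A}(\lambda)+\mathcal{B}(\lambda)\big]=0,\qquad \mathcal{A}(\lambda)=-(l+1)+\sum_{j=1}^\infty\frac{(\epsilon\lambda)^{2j}}{(2j)!}G_l^{(2j)}(0),\quad \mathcal{B}(\lambda)=\sum_{j=0}^\infty\frac{(\epsilon\lambda)^{2j+1}}{(2j+1)!}G_l^{(2j+1)}(0),$$ where $\mathcal{A}$ is even and real for real $\lambda$, and $\mathcal{B}$ is odd and purely imaginary for real $\lambda$.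
   Context: $h_l^{(1)}$ is the outgoing spherical Hankel function of order $l$, equivalently $h_l^{(1)}(z)=z^{-l-1}p_l(z)e^{iz}$ with $p_l(z)=\sum_{n=0}^l\frac{i^{-n-1}}{2^{l-n}}\frac{(2l-n)!}{(l-n)!\,n!}z^n$. Parameters $\mathrm{Ca},\mathrm{We}>0$, $\gamma>1$; $\hat r_0=\frac{3\gamma}{2}\mathrm{Ca}+2(3\gamma-1)\frac{1}{\mathrm{We}}$, $\hat r_l=\frac{1}{\mathrm{We}}(l+2)(l-1)$ for $l\ge1$. *)

theory Defs
  imports "HOL-Complex_Analysis.Complex_Analysis"
begin

definition hankel_poly :: "nat \<Rightarrow> complex \<Rightarrow> complex" where
  "hankel_poly l z = (\<Sum>n=0..l. inverse (\<i> ^ (n + 1)) / 2 ^ (l - n)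
       * (of_nat (fact (2 * l - n)) / (of_nat (fact (l - n)) * of_nat (fact n))) * z ^ n)"

definition hankel1 :: "nat \<Rightarrow> complex \<Rightarrow> complex" where
  "hankel1 l z = hankel_poly l z * exp (\<i> * z) / z ^ (l + 1)"

text \<open>G_l(z) = z h_l'(z) / h_l(z); at the removable singularity z = 0 it is given
  by its limit (the value of the analytic extension).\<close>
definition G :: "nat \<Rightarrow> complex \<Rightarrow> complex" where
  "G l z = (if z = 0 then Lim (at 0) (\<lambda>w. w * deriv (hankel1 l) w / hankel1 l w)
            else z * deriv (hankel1 l) z / hankel1 l z)"

definition rhat :: "real \<Rightarrow> real \<Rightarrow> real \<Rightarrow> nat \<Rightarrow> real" where
  "rhat Ca We \<gamma> l = (if l = 0 then 3 * \<gamma> / 2 * Ca + 2 * (3 * \<gamma> - 1) * (1 / We)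
                       else (1 / We) * (real l + 2) * (real l - 1))"

text \<open>Terms of the even part (j \<ge> 1, reindexed from 0) and of the odd part.\<close>
definition A_term :: "nat \<Rightarrow> real \<Rightarrow> complex \<Rightarrow> nat \<Rightarrow> complex" where
  "A_term l \<epsilon> lam j = (of_real \<epsilon> * lam) ^ (2 * (j + 1)) / of_nat (fact (2 * (j + 1)))
       * (deriv ^^ (2 * (j + 1))) (G l) 0"

definition B_term :: "nat \<Rightarrow> real \<Rightarrow> complex \<Rightarrow> nat \<Rightarrow> complex" where
  "B_term l \<epsilon> lam j = (of_real \<epsilon> * lam) ^ (2 * j + 1) / of_nat (fact (2 * j + 1))
       * (deriv ^^ (2 * j + 1)) (G l) 0"

definition calA :: "nat \<Rightarrow> real \<Rightarrow> complex \<Rightarrow> complex" where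
  "calA l \<epsilon> lam = - of_nat (l + 1) + (\<Sum>j. A_term l \<epsilon> lam j)"

definition calB :: "nat \<Rightarrow> real \<Rightarrow> complex \<Rightarrow> complex" where
  "calB l \<epsilon> lam = (\<Sum>j. B_term l \<epsilon> lam j)"

end

theory Submission
  imports Defs
begin

lemma deriv_real_on_reals:
  fixes f :: "complex \<Rightarrow> complex"
  assumes hol: "f holomorphic_on ball 0 r"
    and re: "\<And>t::real. \<bar>t\<bar> < r \<Longrightarrow> f (of_real t) \<in> \<real>"
    and x: "\<bar>x\<bar> < r"
  shows "deriv f (of_real x) \<in> \<real>"
proof -
  have xin: "of_real x \<in> ball (0::complex) r" using x by simp
  have D: "(f has_field_derivative deriv f (of_real x)) (at (of_real x))"
    using hol xin by (meson holomorphic_derivI open_ball)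
  have "((\<lambda>t. f (of_real t)) has_vector_derivative deriv f (of_real x)) (at x)"
    by (rule has_vector_derivative_real_field[OF D])
  hence "((\<lambda>t. f (of_real t)) has_derivative (\<lambda>h. h *\<^sub>R deriv f (of_real x))) (at x)"
    by (simp add: has_vector_derivative_def)
  hence "((\<lambda>t. Im (f (of_real t))) has_derivative (\<lambda>h. Im (h *\<^sub>R deriv f (of_real x)))) (at x)"
    by (rule has_derivative_Im)
  hence d1: "((\<lambda>t. Im (f (of_real t))) has_field_derivative Im (deriv f (of_real x))) (at x)"
    unfolding has_field_derivative_def
    by (rule has_derivative_eq_rhs) (auto simp: fun_eq_iff)
  have "((\<lambda>t. 0::real) has_field_derivative 0) (at x)" by simp
  hence d2: "((\<lambda>t. Im (f (of_real t))) has_field_derivative 0) (at x)"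
  proof (rule has_field_derivative_transform_within_open[where S="{t. \<bar>t\<bar> < r}"])
    show "open {t::real. \<bar>t\<bar> < r}" by (simp add: open_Collect_less continuous_intros)
    show "x \<in> {t. \<bar>t\<bar> < r}" using x by simp
    fix t assume "t \<in> {t::real. \<bar>t\<bar> < r}"
    thus "0 = Im (f (of_real t))" using re by (auto simp: complex_is_Real_iff)
  qed
  have "Im (deriv f (of_real x)) = 0" using DERIV_unique[OF d1 d2] .
  thus ?thesis by (simp add: complex_is_Real_iff)
qed

lemma higher_deriv_real_on_reals:
  fixes f :: "complex \<Rightarrow> complex"
  assumes hol: "f holomorphic_on ball 0 r"
    and re: "\<And>t::real. \<bar>t\<bar> < r \<Longrightarrow> f (of_real t) \<in> \<real>"
  shows "\<bar>x\<bar> < r \<Longrightarrow> (deriv ^^ n) f (of_real x) \<in> \<real>"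
proof (induction n arbitrary: x)
  case 0 then show ?case using re by simp
next
  case (Suc n)
  have "deriv ((deriv ^^ n) f) (of_real x) \<in> \<real>"
    by (rule deriv_real_on_reals[OF holomorphic_higher_deriv[OF hol] Suc.IH Suc.prems]) simp
  thus ?case by simp
qed


definition hc :: "nat \<Rightarrow> nat \<Rightarrow> complex" where
  "hc l n = inverse (\<i> ^ (n + 1)) / 2 ^ (l - n)
       * (of_nat (fact (2 * l - n)) / (of_nat (fact (l - n)) * of_nat (fact n)))"

definition hr :: "nat \<Rightarrow> nat \<Rightarrow> real" where
  "hr l n = 1 / 2 ^ (l - n) * (fact (2 * l - n) / (fact (l - n) * fact n))"

definition hdp :: "nat \<Rightarrow> complex \<Rightarrow> complex" where
  "hdp l z = (\<Sum>n=0..l. hc l n * (of_nat n * z ^ (n - 1)))"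

definition gg :: "nat \<Rightarrow> complex \<Rightarrow> complex" where
  "gg l z = - of_nat (l + 1) + \<i> * z + z * hdp l z / hankel_poly l z"

lemma hp_eq: "hankel_poly l z = (\<Sum>n=0..l. hc l n * z ^ n)"
  by (simp add: hankel_poly_def hc_def)

lemma hc_hr: "hc l n = inverse (\<i> ^ (n + 1)) * of_real (hr l n)"
  by (simp add: hc_def hr_def)

lemma hp_deriv: "(hankel_poly l has_field_derivative hdp l z) (at z)"
proof -
  have "((\<lambda>z. \<Sum>n=0..l. hc l n * z ^ n) has_field_derivative hdp l z) (at z)"
    unfolding hdp_def by (auto intro!: derivative_eq_intros simp: ac_simps)
  moreover have "(\<lambda>z. \<Sum>n=0..l. hc l n * z ^ n) = hankel_poly l" by (simp add: hp_eq fun_eq_iff)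
  ultimately show ?thesis by simp
qed

lemma hp0: "hankel_poly l 0 \<noteq> 0"
proof -
  have "hankel_poly l 0 = (\<Sum>n=0..l. if n = 0 then hc l n else 0)" unfolding hp_eq
    by (rule sum.cong) (auto simp: power_0_left)
  also have "\<dots> = hc l 0" by (subst sum.delta) auto
  also have "\<dots> \<noteq> 0" by (simp add: hc_def)
  finally show ?thesis .
qed

lemma hankel1_deriv:
  assumes "z \<noteq> 0"
  shows "(hankel1 l has_field_derivative
     ((hdp l z * exp (\<i> * z) + hankel_poly l z * (exp (\<i> * z) * \<i>)) * z ^ (l + 1)
      - hankel_poly l z * exp (\<i> * z) * (of_nat (l + 1) * z ^ l)) / (z ^ (l + 1) * z ^ (l + 1))) (at z)"
proof -
  have "((\<lambda>z. hankel_poly l z * exp (\<i> * z) / z ^ (l + 1)) has_field_derivative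
     ((hdp l z * exp (\<i> * z) + hankel_poly l z * (exp (\<i> * z) * \<i>)) * z ^ (l + 1)
      - hankel_poly l z * exp (\<i> * z) * (of_nat (l + 1) * z ^ l)) / (z ^ (l + 1) * z ^ (l + 1))) (at z)"
    using assms
    by (intro derivative_eq_intros hp_deriv refl) (auto simp: algebra_simps hp_deriv)
  moreover have "hankel1 l = (\<lambda>z. hankel_poly l z * exp (\<i> * z) / z ^ (l + 1))"
    by (simp add: fun_eq_iff hankel1_def)
  ultimately show ?thesis by simp
qed

lemma G_eq_gg:
  assumes "z \<noteq> 0" "hankel_poly l z \<noteq> 0"
  shows "G l z = gg l z"
proof -
  have "deriv (hankel1 l) z = ((hdp l z * exp (\<i> * z) + hankel_poly l z * (exp (\<i> * z) * \<i>)) * z ^ (l + 1)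
      - hankel_poly l z * exp (\<i> * z) * (of_nat (l + 1) * z ^ l)) / (z ^ (l + 1) * z ^ (l + 1))"
    using hankel1_deriv[OF assms(1)] by (rule DERIV_imp_deriv)
  hence "G l z = z * (((hdp l z * exp (\<i> * z) + hankel_poly l z * (exp (\<i> * z) * \<i>)) * z ^ (l + 1)
      - hankel_poly l z * exp (\<i> * z) * (of_nat (l + 1) * z ^ l)) / (z ^ (l + 1) * z ^ (l + 1)))
       / (hankel_poly l z * exp (\<i> * z) / z ^ (l + 1))"
    using assms by (simp add: G_def hankel1_def)
  also have "\<dots> = gg l z" using assms
    by (simp add: gg_def field_simps power2_eq_square)
  finally show ?thesis .
qed

lemma hp_cont: "continuous_on UNIV (hankel_poly l)"
  unfolding hp_eq by (intro continuous_intros)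

lemma hp_nz: "\<exists>r>0. \<forall>z\<in>ball 0 r. hankel_poly l z \<noteq> 0"
proof -
  have "continuous (at 0) (hankel_poly l)"
    using hp_cont by (simp add: continuous_on_eq_continuous_at)
  from continuous_at_avoid[OF this hp0] obtain e where "e > 0" "\<forall>y. dist 0 y < e \<longrightarrow> hankel_poly l y \<noteq> 0"
    by blast
  thus ?thesis by (auto simp: dist_commute)
qed

lemma gg_holo:
  assumes "\<forall>z\<in>S. hankel_poly l z \<noteq> 0"
  shows "gg l holomorphic_on S"
proof -
  have "(\<lambda>z. - of_nat (l + 1) + \<i> * z + z * (\<Sum>n=0..l. hc l n * (of_nat n * z ^ (n - 1))) /
      (\<Sum>n=0..l. hc l n * z ^ n)) holomorphic_on S"
    using assms unfolding hp_eq by (intro holomorphic_intros) auto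
  thus ?thesis unfolding gg_def hdp_def hp_eq .
qed

lemma gg0: "gg l 0 = - of_nat (l + 1)"
  by (simp add: gg_def)


lemma ipow1: "inverse (\<i> ^ (n + 1)) * \<i> ^ n = - \<i>"
  by (simp add: inverse_mult_distrib)

lemma ipow2: "inverse (\<i> ^ (n + 2)) * \<i> ^ n = - 1"
proof -
  have "\<i> ^ (n + 2) = \<i> ^ n * (\<i> * \<i>)" by (simp add: power_add)
  thus ?thesis by (simp add: inverse_mult_distrib)
qed

lemma hp_imag: "hankel_poly l (\<i> * of_real x) = - \<i> * of_real (\<Sum>n=0..l. hr l n * x ^ n)"
proof -
  have "hankel_poly l (\<i> * of_real x) = (\<Sum>n=0..l. - \<i> * of_real (hr l n * x ^ n))"
    unfolding hp_eq
  proof (rule sum.cong)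
    fix n
    have "hc l n * (\<i> * of_real x) ^ n = (inverse (\<i> ^ (n + 1)) * \<i> ^ n) * of_real (hr l n * x ^ n)"
      by (simp add: hc_hr power_mult_distrib)
    thus "hc l n * (\<i> * of_real x) ^ n = - \<i> * of_real (hr l n * x ^ n)" by (simp only: ipow1)
  qed simp
  thus ?thesis by (simp add: sum_distrib_left)
qed

lemma hdp_imag: "hdp l (\<i> * of_real x) = - of_real (\<Sum>n=0..l. hr l n * (of_nat n * x ^ (n - 1)))"
proof -
  have "hdp l (\<i> * of_real x) = (\<Sum>n=0..l. - of_real (hr l n * (of_nat n * x ^ (n - 1))))"
    unfolding hdp_def
  proof (rule sum.cong)
    fix n
    show "hc l n * (of_nat n * (\<i> * of_real x) ^ (n - 1)) = - of_real (hr l n * (of_nat n * x ^ (n - 1)))"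
    proof (cases n)
      case 0 then show ?thesis by simp
    next
      case (Suc m)
      have "hc l n * (of_nat n * (\<i> * of_real x) ^ (n - 1)) =
          (inverse (\<i> ^ (m + 2)) * \<i> ^ m) * of_real (hr l n * (of_nat n * x ^ (n - 1)))"
        using Suc by (simp add: hc_hr power_mult_distrib)
      thus ?thesis by (simp only: ipow2) simp
    qed
  qed simp
  thus ?thesis by (simp add: sum_negf)
qed

lemma gg_imag_real:
  assumes "hankel_poly l (\<i> * of_real x) \<noteq> 0"
  shows "gg l (\<i> * of_real x) \<in> \<real>"
proof -
  define Q where "Q = (\<Sum>n=0..l. hr l n * x ^ n)"
  define R where "R = (\<Sum>n=0..l. hr l n * (of_nat n * x ^ (n - 1)))"
  have Q: "Q \<noteq> 0"
  proof
    assume "Q = 0"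
    hence "hankel_poly l (\<i> * of_real x) = 0" unfolding hp_imag Q_def[symmetric] by simp
    thus False using assms by simp
  qed
  have "gg l (\<i> * of_real x) = of_real (- real (l + 1) - x + x * R / Q)"
    unfolding gg_def hp_imag hdp_imag Q_def[symmetric] R_def[symmetric]
    using Q by (simp add: field_simps)
  thus ?thesis by simp
qed


lemma split_series:
  fixes a :: "nat \<Rightarrow> complex"
  assumes abs: "summable (\<lambda>n. norm (a n))"
  shows "summable (\<lambda>j. a (2*j)) \<and> summable (\<lambda>j. a (2*j+1)) \<and>
         suminf a = (\<Sum>j. a (2*j)) + (\<Sum>j. a (2*j+1))"
proof -
  define E where "E n = (if even n then a n else 0)" for n
  define Od where "Od n = (if odd n then a n else 0)" for n
  have sE: "summable E"
    by (rule summable_comparison_test[OF _ abs]) (auto simp: E_def)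
  have sO: "summable Od"
    by (rule summable_comparison_test[OF _ abs]) (auto simp: Od_def)
  have aEO: "a = (\<lambda>n. E n + Od n)" by (auto simp: E_def Od_def fun_eq_iff)
  have "(\<lambda>j. E (2*j)) sums suminf E"
    by (subst sums_mono_reindex[of "\<lambda>j. 2*j"]) (auto simp: strict_mono_def E_def summable_sums[OF sE] elim!: oddE)
  hence 1: "(\<lambda>j. a (2*j)) sums suminf E" by (simp add: E_def)
  have "(\<lambda>j. Od (2*j+1)) sums suminf Od"
    by (subst sums_mono_reindex[of "\<lambda>j. 2*j+1"]) (auto simp: strict_mono_def Od_def summable_sums[OF sO] image_iff elim!: oddE)
  hence 2: "(\<lambda>j. a (2*j+1)) sums suminf Od" by (simp add: Od_def)
  have "suminf a = suminf E + suminf Od" unfolding aEO by (rule suminf_add[OF sE sO, symmetric])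
  with 1 2 show ?thesis by (simp add: sums_iff)
qed

lemma im0: "Im d = 0 \<Longrightarrow> Im (complex_of_real c * d) = 0" by simp
lemma re0: "Re d = 0 \<Longrightarrow> Re (complex_of_real c * d) = 0" by simp

theorem proposition8p1:
  fixes l :: nat and Ca We \<gamma> :: real
  assumes "Ca > 0" and "We > 0" and "\<gamma> > 1"
  shows "(\<forall>j. Im ((deriv ^^ (2 * j)) (G l) 0) = 0 \<and> Re ((deriv ^^ (2 * j + 1)) (G l) 0) = 0)
     \<and> G l 0 = - of_nat (l + 1)
     \<and> (\<exists>\<delta>>0. \<forall>(\<epsilon>::real) (lam::complex). norm (of_real \<epsilon> * lam) < \<delta> \<longrightarrow>
          summable (A_term l \<epsilon> lam) \<and> summable (B_term l \<epsilon> lam)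
          \<and> G l (of_real \<epsilon> * lam) = calA l \<epsilon> lam + calB l \<epsilon> lam
          \<and> (lam\<^sup>2 + of_real (rhat Ca We \<gamma> l) * G l (of_real \<epsilon> * lam) = 0
               \<longleftrightarrow> lam\<^sup>2 + of_real (rhat Ca We \<gamma> l) * (calA l \<epsilon> lam + calB l \<epsilon> lam) = 0)
          \<and> calA l \<epsilon> (- lam) = calA l \<epsilon> lam
          \<and> calB l \<epsilon> (- lam) = - calB l \<epsilon> lam
          \<and> (lam \<in> \<real> \<longrightarrow> calA l \<epsilon> lam \<in> \<real> \<and> Re (calB l \<epsilon> lam) = 0))"
proof -
  obtain r where r: "r > 0" and rP: "\<forall>z\<in>ball 0 r. hankel_poly l z \<noteq> 0"
    using hp_nz by blast
  have hol: "gg l holomorphic_on ball 0 r" by (rule gg_holo[OF rP])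
  have cont0: "isCont (gg l) 0"
    using hol r by (meson centre_in_ball field_differentiable_imp_continuous_at
        holomorphic_on_imp_differentiable_at open_ball)
  have G0: "G l 0 = gg l 0"
  proof -
    have ev: "eventually (\<lambda>w. gg l w = w * deriv (hankel1 l) w / hankel1 l w) (at 0)"
      unfolding eventually_at using r rP
      by (intro exI[of _ r]) (auto simp: G_eq_gg[symmetric] G_def dist_norm)
    have "((\<lambda>w. w * deriv (hankel1 l) w / hankel1 l w) \<longlongrightarrow> gg l 0) (at 0)"
      using tendsto_cong[OF ev] isContD[OF cont0] by simp
    thus ?thesis unfolding G_def by (simp add: tendsto_Lim)
  qed
  have GB: "G l z = gg l z" if "z \<in> ball 0 r" for z
    using that rP G0 G_eq_gg by (cases "z = 0") auto
  have Dn: "(deriv ^^ n) (G l) 0 = (deriv ^^ n) (gg l) 0" for n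
  proof (rule higher_deriv_cong_ev[OF _ refl])
    show "eventually (\<lambda>z. G l z = gg l z) (nhds 0)"
      unfolding eventually_nhds using r GB by (intro exI[of _ "ball 0 r"]) auto
  qed
  define D where "D n = (deriv ^^ n) (gg l) 0" for n
  have holF: "(\<lambda>w. gg l (\<i> * w)) holomorphic_on ball 0 r"
    by (rule holomorphic_on_compose_gen[OF _ hol, unfolded o_def]) (auto intro!: holomorphic_intros simp: norm_mult)
    
  have Freal: "(\<lambda>w. gg l (\<i> * w)) (of_real t) \<in> \<real>" if "\<bar>t\<bar> < r" for t
    using that rP by (intro gg_imag_real) (auto simp: norm_mult)
  have iD: "\<i> ^ n * D n \<in> \<real>" for n
  proof -
    have "(deriv ^^ n) (\<lambda>w. gg l (\<i> * w)) (of_real 0) \<in> \<real>"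
      by (rule higher_deriv_real_on_reals[OF holF Freal]) (use r in auto)
    moreover have "(deriv ^^ n) (\<lambda>w. gg l (\<i> * w)) 0 = \<i> ^ n * D n"
      unfolding D_def using r
      by (subst higher_deriv_compose_linear[OF hol, where S="ball 0 r"]) (auto simp: norm_mult)
    ultimately show ?thesis by simp
  qed
  have even_part: "Im (D (2*j)) = 0" for j
  proof -
    have "\<i> ^ (2*j) * D (2*j) = of_real ((-1)^j) * D (2*j)" by (simp add: power_mult)
    with iD[of "2*j"] have "Im (of_real ((-1)^j) * D (2*j)) = 0" by (simp add: complex_is_Real_iff)
    thus ?thesis by simp
  qed
  have odd_part: "Re (D (2*j+1)) = 0" for j
  proof -
    have "\<i> ^ (2*j+1) * D (2*j+1) = of_real ((-1)^j) * (\<i> * D (2*j+1))" by (simp add: power_mult)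
    with iD[of "2*j+1"] have "Im (of_real ((-1)^j) * (\<i> * D (2*j+1))) = 0" by (simp add: complex_is_Real_iff)
    thus ?thesis by simp
  qed
  have part1: "\<forall>j. Im ((deriv ^^ (2 * j)) (G l) 0) = 0 \<and> Re ((deriv ^^ (2 * j + 1)) (G l) 0) = 0"
    using even_part odd_part unfolding Dn D_def by blast
  have part2: "G l 0 = - of_nat (l + 1)" using G0 gg0 by simp
  have part3: "\<forall>(\<epsilon>::real) (lam::complex). norm (of_real \<epsilon> * lam) < r \<longrightarrow>
          summable (A_term l \<epsilon> lam) \<and> summable (B_term l \<epsilon> lam)
          \<and> G l (of_real \<epsilon> * lam) = calA l \<epsilon> lam + calB l \<epsilon> lam
          \<and> (lam\<^sup>2 + of_real (rhat Ca We \<gamma> l) * G l (of_real \<epsilon> * lam) = 0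
               \<longleftrightarrow> lam\<^sup>2 + of_real (rhat Ca We \<gamma> l) * (calA l \<epsilon> lam + calB l \<epsilon> lam) = 0)
          \<and> calA l \<epsilon> (- lam) = calA l \<epsilon> lam
          \<and> calB l \<epsilon> (- lam) = - calB l \<epsilon> lam
          \<and> (lam \<in> \<real> \<longrightarrow> calA l \<epsilon> lam \<in> \<real> \<and> Re (calB l \<epsilon> lam) = 0)"
  proof (intro allI impI)
    fix \<epsilon> :: real and lam :: complex
    assume w: "norm (of_real \<epsilon> * lam) < r"
    define w where "w = of_real \<epsilon> * lam"
    define a where "a n = D n / fact n * w ^ n" for n
    have wB: "w \<in> ball 0 r" using w by (simp add: w_def)
    have sums_a: "a sums gg l w"
      unfolding a_def D_def using holomorphic_power_series[OF hol wB] by simp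
    define w' :: complex where "w' = of_real ((norm w + r) / 2)"
    have nw': "norm w' = (norm w + r) / 2" using r unfolding w'_def norm_of_real by simp
    have w'B: "w' \<in> ball 0 r" "norm w < norm w'" using wB nw' by auto
    have "summable (\<lambda>n. D n / fact n * w' ^ n)"
      using holomorphic_power_series[OF hol w'B(1)] by (simp add: D_def sums_iff)
    hence absa: "summable (\<lambda>n. norm (a n))"
      unfolding a_def by (rule powser_insidea[OF _ w'B(2)])
    note sp = split_series[OF absa]
    have gen: "(of_real \<epsilon> * lam) ^ n / of_nat (fact n) * (deriv ^^ n) (G l) 0 = a n" for n
      unfolding a_def Dn D_def w_def by simp
    have Aeq: "A_term l \<epsilon> lam j = a (2 * Suc j)" for j
      unfolding A_term_def gen[symmetric] by simp
    have Beq: "B_term l \<epsilon> lam j = a (2 * j + 1)" for j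
      unfolding B_term_def gen[symmetric] by simp
    have sumA: "summable (A_term l \<epsilon> lam)"
      unfolding Aeq using sp summable_Suc_iff[of "\<lambda>j. a (2*j)"] by simp
    have sumB: "summable (B_term l \<epsilon> lam)"
      unfolding Beq using sp by simp
    have "(\<Sum>j. a (2*j)) = (\<Sum>j. a (2 * Suc j)) + a 0"
      using suminf_split_head[of "\<lambda>j. a (2*j)"] sp by simp
    moreover have "a 0 = - of_nat (l + 1)" by (simp add: a_def D_def gg0)
    ultimately have "suminf a = calA l \<epsilon> lam + calB l \<epsilon> lam"
      using sp unfolding calA_def calB_def Aeq Beq by simp
    hence Geq: "G l (of_real \<epsilon> * lam) = calA l \<epsilon> lam + calB l \<epsilon> lam"
      using sums_a GB[OF wB] by (simp add: sums_iff w_def)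
    have Aneg: "A_term l \<epsilon> (- lam) = A_term l \<epsilon> lam"
      by (simp add: fun_eq_iff A_term_def)
    have Bneg: "B_term l \<epsilon> (- lam) = (\<lambda>j. - B_term l \<epsilon> lam j)"
      by (simp add: fun_eq_iff B_term_def)
    have evA: "calA l \<epsilon> (- lam) = calA l \<epsilon> lam" by (simp add: calA_def Aneg)
    have oddB: "calB l \<epsilon> (- lam) = - calB l \<epsilon> lam" by (simp add: calB_def Bneg suminf_minus[OF sumB])
    have realpart: "calA l \<epsilon> lam \<in> \<real> \<and> Re (calB l \<epsilon> lam) = 0" if "lam \<in> \<real>"
    proof -
      obtain t where t: "lam = of_real t" using \<open>lam \<in> \<real>\<close> by (auto elim: Reals_cases)
      have gen2: "(of_real \<epsilon> * lam) ^ n / of_nat (fact n) * (deriv ^^ n) (G l) 0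
                  = of_real ((\<epsilon> * t) ^ n / fact n) * D n" for n
        unfolding t Dn D_def by simp
      have imA: "Im (A_term l \<epsilon> lam j) = 0" for j
      proof -
        have "A_term l \<epsilon> lam j = of_real ((\<epsilon> * t) ^ (2 * (j + 1)) / fact (2 * (j + 1))) * D (2 * (j + 1))"
          unfolding A_term_def gen2 ..
        thus ?thesis using im0[OF even_part[of "j + 1"]] by (simp only:)
      qed
      have reB: "Re (B_term l \<epsilon> lam j) = 0" for j
      proof -
        have "B_term l \<epsilon> lam j = of_real ((\<epsilon> * t) ^ (2 * j + 1) / fact (2 * j + 1)) * D (2 * j + 1)"
          unfolding B_term_def gen2 ..
        thus ?thesis using re0[OF odd_part[of j]] by (simp only:)
      qed
      have "Im (calA l \<epsilon> lam) = 0"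
        unfolding calA_def using Im_suminf[OF sumA] imA by simp
      moreover have "Re (calB l \<epsilon> lam) = 0"
        unfolding calB_def using Re_suminf[OF sumB] reB by simp
      ultimately show ?thesis by (simp add: complex_is_Real_iff)
    qed
    show "summable (A_term l \<epsilon> lam) \<and> summable (B_term l \<epsilon> lam)
          \<and> G l (of_real \<epsilon> * lam) = calA l \<epsilon> lam + calB l \<epsilon> lam
          \<and> (lam\<^sup>2 + of_real (rhat Ca We \<gamma> l) * G l (of_real \<epsilon> * lam) = 0
               \<longleftrightarrow> lam\<^sup>2 + of_real (rhat Ca We \<gamma> l) * (calA l \<epsilon> lam + calB l \<epsilon> lam) = 0)
          \<and> calA l \<epsilon> (- lam) = calA l \<epsilon> lam
          \<and> calB l \<epsilon> (- lam) = - calB l \<epsilon> lam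
          \<and> (lam \<in> \<real> \<longrightarrow> calA l \<epsilon> lam \<in> \<real> \<and> Re (calB l \<epsilon> lam) = 0)"
      using sumA sumB Geq evA oddB realpart by simp
  qed
  show ?thesis using part1 part2 part3 r by blast
qed

end
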